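(* Let $\nu$ be a positive Radon measure on $\mathbb{R}$. Assume that the restriction $\mu=\nu|_{\mathbb{R}_+}$ of $\nu$ to $\mathbb{R}_+=[0,\infty)$ has finite moments of all orders and satisfies $\mu\big(\mathbb{R}_+\setminus[0,s_\mu)\big)=0$, where $s_\mu:=\sup\{x:x\in\mathrm{supp}(\mu)\}\in[0,\infty]$. Assume moreover that there is a constant $C>0$ such that \[ \int_{\mathbb{R}_-} t^{2n}\,d\nu(t)\le C\int_{\mathbb{R}_+} t^{2n}\,d\nu(t)\quad\text{for all } n\in\mathbb{N}, \] where $\mathbb{R}_-=\mathbb{R}\setminus\mathbb{R}_+$. Then the set \[ \Big\{\sum_{n=0}^\infty a_n t^n : a_n\ge 0,\ \text{the series }\sum_{n=0}^\infty a_n t^n\text{ converges in }L^2(\nu)\Big\} \] is a closed convex cone in $L^2(\nu)$.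
   Context: $\mathbb{N}=\{0,1,2,\dots\}$. A measure has finite moments of all orders if $\int t^n\,d\mu(t)<\infty$ for all $n\in\mathbb{N}$. Convergence of a series means norm convergence of its partial sums $\sum_{n=0}^N$ as $N\to\infty$. *)

theory Defs
  imports "HOL-Analysis.Analysis"
begin

definition radon_on_real :: "real measure \<Rightarrow> bool" where
  "radon_on_real M \<longleftrightarrow> sets M = sets borel \<and> (\<forall>K. compact K \<longrightarrow> emeasure M K < \<infinity>)"

definition restr_pos :: "real measure \<Rightarrow> real measure" where
  "restr_pos M = density M (indicator {0..})"

definition msupp :: "real measure \<Rightarrow> real set" where
  "msupp \<mu> = {x. \<forall>e>0. emeasure \<mu> (ball x e) > 0}"

text \<open>s_mu = sup of the support, in [0,oo] (taken to be 0 for empty support).\<close>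
definition supp_sup :: "real measure \<Rightarrow> ereal" where
  "supp_sup \<mu> = max 0 (SUP x\<in>msupp \<mu>. ereal x)"

text \<open>Representatives of elements of L^2(M).\<close>
definition L2 :: "real measure \<Rightarrow> (real \<Rightarrow> real) set" where
  "L2 M = {f. f \<in> borel_measurable M \<and> integrable M (\<lambda>t. (f t)^2)}"

definition L2_tendsto :: "real measure \<Rightarrow> (nat \<Rightarrow> real \<Rightarrow> real) \<Rightarrow> (real \<Rightarrow> real) \<Rightarrow> bool" where
  "L2_tendsto M F f \<longleftrightarrow> (\<forall>k. F k \<in> L2 M) \<and> f \<in> L2 M \<and>
     ((\<lambda>k. \<integral>\<^sup>+ t. ennreal ((F k t - f t)^2) \<partial>M) \<longlonglongrightarrow> 0)"

definition pos_series_set :: "real measure \<Rightarrow> (real \<Rightarrow> real) set" where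
  "pos_series_set M = {f. \<exists>a::nat \<Rightarrow> real. (\<forall>n. a n \<ge> 0) \<and>
      L2_tendsto M (\<lambda>N t. \<Sum>n\<le>N. a n * t ^ n) f}"

end

theory Submission
  imports Defs "HOL-Library.Diagonal_Subsequence"
begin

lemma sq_ineq: "(x + y) ^ 2 \<le> 2 * x ^ 2 + 2 * (y::real) ^ 2"
proof -
  have "0 \<le> (x - y) ^ 2" by simp
  then show ?thesis by (simp add: power2_eq_square algebra_simps)
qed

lemma L2_lin:
  assumes F: "L2_tendsto M F f" and G: "L2_tendsto M G g"
  shows "L2_tendsto M (\<lambda>k t. \<alpha> * F k t + \<beta> * G k t) (\<lambda>t. \<alpha> * f t + \<beta> * g t)"
proof -
  have memb: "(\<lambda>t. \<alpha> * u t + \<beta> * v t) \<in> L2 M" if "u \<in> L2 M" "v \<in> L2 M" for u v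
  proof -
    have [measurable]: "u \<in> borel_measurable M" "v \<in> borel_measurable M"
      and iu: "integrable M (\<lambda>t. (u t) ^ 2)" and iv: "integrable M (\<lambda>t. (v t) ^ 2)"
      using that by (auto simp: L2_def)
    have "integrable M (\<lambda>t. 2*\<alpha>^2 * (u t) ^ 2 + 2*\<beta>^2*(v t) ^ 2)"
      using iu iv by auto
    then have "integrable M (\<lambda>t. (\<alpha> * u t + \<beta> * v t) ^ 2)"
      by (rule Bochner_Integration.integrable_bound) (use sq_ineq[of "\<alpha> * u _" "\<beta> * v _"] in \<open>auto simp: power_mult_distrib mult.assoc\<close>)
    then show ?thesis by (auto simp: L2_def)
  qed
  have lim: "(\<lambda>k. ennreal (2*\<alpha>^2) * (\<integral>\<^sup>+ t. ennreal ((F k t - f t) ^ 2) \<partial>M)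
       + ennreal (2*\<beta>^2) * (\<integral>\<^sup>+ t. ennreal ((G k t - g t) ^ 2) \<partial>M)) \<longlonglongrightarrow> 0"
  proof -
    have "(\<lambda>k. ennreal (2*\<alpha>^2) * (\<integral>\<^sup>+ t. ennreal ((F k t - f t) ^ 2) \<partial>M)
       + ennreal (2*\<beta>^2) * (\<integral>\<^sup>+ t. ennreal ((G k t - g t) ^ 2) \<partial>M)) \<longlonglongrightarrow>
       ennreal (2*\<alpha>^2) * 0 + ennreal (2*\<beta>^2) * 0"
      using F G unfolding L2_tendsto_def
      by (intro tendsto_add tendsto_mult_ennreal tendsto_const) auto
    then show ?thesis by simp
  qed
  have meas: "F k \<in> borel_measurable M" "f \<in> borel_measurable M" "G k \<in> borel_measurable M" "g \<in> borel_measurable M" for k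
    using F G by (auto simp: L2_tendsto_def L2_def)
  have le: "(\<integral>\<^sup>+ t. ennreal ((\<alpha> * F k t + \<beta> * G k t - (\<alpha> * f t + \<beta> * g t)) ^ 2) \<partial>M) \<le>
     ennreal (2*\<alpha>^2) * (\<integral>\<^sup>+ t. ennreal ((F k t - f t) ^ 2) \<partial>M)
       + ennreal (2*\<beta>^2) * (\<integral>\<^sup>+ t. ennreal ((G k t - g t) ^ 2) \<partial>M)" for k
  proof -
    have [measurable]: "F k \<in> borel_measurable M" "f \<in> borel_measurable M" "G k \<in> borel_measurable M" "g \<in> borel_measurable M"
      using meas by auto
    have "(\<integral>\<^sup>+ t. ennreal ((\<alpha> * F k t + \<beta> * G k t - (\<alpha> * f t + \<beta> * g t)) ^ 2) \<partial>M) \<le>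
       (\<integral>\<^sup>+ t. ennreal (2*\<alpha>^2) * ennreal ((F k t - f t) ^ 2) + ennreal (2*\<beta>^2) * ennreal ((G k t - g t) ^ 2) \<partial>M)"
    proof (rule nn_integral_mono)
      fix t
      have "(\<alpha> * F k t + \<beta> * G k t - (\<alpha> * f t + \<beta> * g t)) ^ 2 = (\<alpha> * (F k t - f t) + \<beta> * (G k t - g t)) ^ 2"
        by (simp add: algebra_simps)
      also have "\<dots> \<le> 2*\<alpha>^2 * (F k t - f t) ^ 2 + 2*\<beta>^2 * (G k t - g t) ^ 2"
        using sq_ineq[of "\<alpha> * (F k t - f t)" "\<beta> * (G k t - g t)"] by (simp add: power_mult_distrib)
      finally show "ennreal ((\<alpha> * F k t + \<beta> * G k t - (\<alpha> * f t + \<beta> * g t)) ^ 2) \<le>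
         ennreal (2*\<alpha>^2) * ennreal ((F k t - f t) ^ 2) + ennreal (2*\<beta>^2) * ennreal ((G k t - g t) ^ 2)"
        by (simp add: ennreal_mult[symmetric] ennreal_plus[symmetric] del: ennreal_plus)
    qed
    also have "\<dots> = ennreal (2*\<alpha>^2) * (\<integral>\<^sup>+ t. ennreal ((F k t - f t) ^ 2) \<partial>M)
       + ennreal (2*\<beta>^2) * (\<integral>\<^sup>+ t. ennreal ((G k t - g t) ^ 2) \<partial>M)"
      by (simp add: nn_integral_add nn_integral_cmult)
    finally show ?thesis .
  qed
  show ?thesis
    unfolding L2_tendsto_def
  proof (intro conjI allI)
    show "(\<lambda>t. \<alpha> * F k t + \<beta> * G k t) \<in> L2 M" for k using F G memb by (auto simp: L2_tendsto_def)
    show "(\<lambda>t. \<alpha> * f t + \<beta> * g t) \<in> L2 M" using F G memb by (auto simp: L2_tendsto_def)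
    show "(\<lambda>k. \<integral>\<^sup>+ t. ennreal ((\<alpha> * F k t + \<beta> * G k t - (\<alpha> * f t + \<beta> * g t))\<^sup>2) \<partial>M) \<longlonglongrightarrow> 0"
      by (rule tendsto_sandwich[OF _ _ tendsto_const lim]) (use le in auto)
  qed
qed

lemma sq_to_zero:
  fixes X :: "nat \<Rightarrow> real"
  assumes "(\<lambda>n. (X n - a) ^ 2) \<longlonglongrightarrow> 0"
  shows "X \<longlonglongrightarrow> a"
proof -
  have "(\<lambda>n. sqrt ((X n - a) ^ 2)) \<longlonglongrightarrow> sqrt 0"
    by (intro tendsto_real_sqrt assms)
  then have "(\<lambda>n. \<bar>X n - a\<bar>) \<longlonglongrightarrow> 0" by simp
  then have "(\<lambda>n. X n - a) \<longlonglongrightarrow> 0" by (simp add: tendsto_rabs_zero_iff)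
  then show ?thesis by (simp add: LIM_zero_iff)
qed

lemma L2_sq_integrable:
  assumes "u \<in> L2 M" "v \<in> L2 M"
  shows "integrable M (\<lambda>t. (u t - v t) ^ 2)"
proof -
  have [measurable]: "u \<in> borel_measurable M" "v \<in> borel_measurable M"
    and iu: "integrable M (\<lambda>t. (u t) ^ 2)" and iv: "integrable M (\<lambda>t. (v t) ^ 2)"
    using assms by (auto simp: L2_def)
  have "integrable M (\<lambda>t. 2 * (u t) ^ 2 + 2 * (v t) ^ 2)"
    using iu iv by auto
  then show ?thesis
    by (rule Bochner_Integration.integrable_bound) (use sq_ineq[of "u _" "- v _"] in auto)
qed

lemma L2_sub_AE:
  assumes F: "L2_tendsto M F f"
  shows "\<exists>r. strict_mono r \<and> (AE x in M. (\<lambda>n. F (r n) x) \<longlonglongrightarrow> f x)"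
proof -
  have int: "integrable M (\<lambda>t. (F n t - f t) ^ 2)" for n
    using F L2_sq_integrable by (auto simp: L2_tendsto_def)
  have eq: "(\<integral>x. norm ((F n x - f x) ^ 2) \<partial>M) = enn2real (\<integral>\<^sup>+ t. ennreal ((F n t - f t) ^ 2) \<partial>M)" for n
  proof -
    have m: "(\<lambda>t. F n t) \<in> borel_measurable M" "f \<in> borel_measurable M"
      using F by (auto simp: L2_tendsto_def L2_def)
    have "(\<integral>x. norm ((F n x - f x) ^ 2) \<partial>M) = (\<integral>x. (F n x - f x) ^ 2 \<partial>M)" by simp
    also have "\<dots> = enn2real (\<integral>\<^sup>+ t. ennreal ((F n t - f t) ^ 2) \<partial>M)"
      by (rule integral_eq_nn_integral) (use m in auto)
    finally show ?thesis .
  qed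
  have "(\<lambda>n. enn2real (\<integral>\<^sup>+ t. ennreal ((F n t - f t) ^ 2) \<partial>M)) \<longlonglongrightarrow> enn2real 0"
    using F unfolding L2_tendsto_def by (intro tendsto_enn2real) auto
  then have "(\<lambda>n. (\<integral>x. norm ((F n x - f x) ^ 2) \<partial>M)) \<longlonglongrightarrow> 0"
    unfolding eq by simp
  from tendsto_L1_AE_subseq[OF int this] obtain r where r: "strict_mono r"
    and ae: "AE x in M. (\<lambda>n. (F (r n) x - f x) ^ 2) \<longlonglongrightarrow> 0" by auto
  show ?thesis
  proof (intro exI conjI)
    show "strict_mono r" by fact
    show "AE x in M. (\<lambda>n. F (r n) x) \<longlonglongrightarrow> f x"
      using ae by eventually_elim (rule sq_to_zero)
  qed
qed


locale CS =
  fixes \<nu> :: "real measure" and C :: real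
  assumes radon: "radon_on_real \<nu>"
    and moments: "\<forall>n::nat. (\<integral>\<^sup>+ t. ennreal (t ^ n) \<partial>(restr_pos \<nu>)) < \<infinity>"
    and no_mass_at_end: "emeasure (restr_pos \<nu>) {t. 0 \<le> t \<and> supp_sup (restr_pos \<nu>) \<le> ereal t} = 0"
    and C_pos: "C > 0"
    and neg_bound: "\<forall>n::nat. (\<integral>\<^sup>+ t. ennreal (t ^ (2*n)) * indicator {..<0} t \<partial>\<nu>)
                     \<le> ennreal C * (\<integral>\<^sup>+ t. ennreal (t ^ (2*n)) * indicator {0..} t \<partial>\<nu>)"
begin

lemma sets_nu[measurable_cong, simp]: "sets \<nu> = sets borel"
  using radon by (simp add: radon_on_real_def)

lemma space_nu[simp]: "space \<nu> = UNIV"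
  using sets_eq_imp_space_eq[OF sets_nu] by simp

lemma meas_nu[simp]: "borel_measurable \<nu> = borel_measurable borel"
  by (rule measurable_cong_sets) auto

lemma restr_int: "g \<in> borel_measurable borel \<Longrightarrow>
  (\<integral>\<^sup>+ t. g t \<partial>restr_pos \<nu>) = (\<integral>\<^sup>+ t. g t * indicator {0..} t \<partial>\<nu>)"
  unfolding restr_pos_def by (subst nn_integral_density) (auto simp: mult.commute)

lemma restr_emeasure: "A \<in> sets borel \<Longrightarrow> emeasure (restr_pos \<nu>) A = emeasure \<nu> (A \<inter> {0..})"
proof -
  assume A: "A \<in> sets borel"
  have "emeasure \<nu> (A \<inter> {0..}) = (\<integral>\<^sup>+ t. indicator (A \<inter> {0..}) t \<partial>\<nu>)"
    using A by (subst nn_integral_indicator) auto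
  also have "\<dots> = (\<integral>\<^sup>+ t. indicator {0..} t * indicator A t \<partial>\<nu>)"
    by (simp add: indicator_inter_arith mult.commute)
  also have "\<dots> = emeasure (restr_pos \<nu>) A"
    unfolding restr_pos_def using A by (subst emeasure_density) auto
  finally show ?thesis by simp
qed

lemma mom_pos: "(\<integral>\<^sup>+ t. ennreal (t ^ n) * indicator {0..} t \<partial>\<nu>) < \<infinity>"
  using moments[rule_format, of n] restr_int[of "\<lambda>t. ennreal (t ^ n)"] by simp

lemma nb: "(\<integral>\<^sup>+ t. ennreal (t ^ (2*n)) * indicator {..<0} t \<partial>\<nu>)
                     \<le> ennreal C * (\<integral>\<^sup>+ t. ennreal (t ^ (2*n)) * indicator {0..} t \<partial>\<nu>)"
  using neg_bound by auto

lemma split_int: "g \<in> borel_measurable borel \<Longrightarrow> (\<integral>\<^sup>+ t. g t \<partial>\<nu>) =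
   (\<integral>\<^sup>+ t. g t * indicator {..<0} t \<partial>\<nu>) + (\<integral>\<^sup>+ t. g t * indicator {0..} t \<partial>\<nu>)"
proof -
  assume [measurable]: "g \<in> borel_measurable borel"
  have "(\<integral>\<^sup>+ t. g t \<partial>\<nu>) = (\<integral>\<^sup>+ t. g t * indicator {..<0} t + g t * indicator {0..} t \<partial>\<nu>)"
    by (rule nn_integral_cong) (auto simp: indicator_def)
  also have "\<dots> = (\<integral>\<^sup>+ t. g t * indicator {..<0} t \<partial>\<nu>) + (\<integral>\<^sup>+ t. g t * indicator {0..} t \<partial>\<nu>)"
    by (rule nn_integral_add) auto
  finally show ?thesis .
qed

lemma even_mom: "(\<integral>\<^sup>+ t. ennreal (t ^ (2*n)) \<partial>\<nu>) < \<infinity>"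
proof -
  have "(\<integral>\<^sup>+ t. ennreal (t ^ (2*n)) \<partial>\<nu>) =
   (\<integral>\<^sup>+ t. ennreal (t ^ (2*n)) * indicator {..<0} t \<partial>\<nu>) + (\<integral>\<^sup>+ t. ennreal (t ^ (2*n)) * indicator {0..} t \<partial>\<nu>)"
    by (rule split_int) auto
  also have "\<dots> \<le> ennreal C * (\<integral>\<^sup>+ t. ennreal (t ^ (2*n)) * indicator {0..} t \<partial>\<nu>) + (\<integral>\<^sup>+ t. ennreal (t ^ (2*n)) * indicator {0..} t \<partial>\<nu>)"
    using nb by (rule add_right_mono)
  also have "\<dots> < \<infinity>"
    using mom_pos[of "2*n"] by (simp add: ennreal_mult_less_top)
  finally show ?thesis .
qed

lemma fin: "emeasure \<nu> UNIV < \<infinity>"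
  using even_mom[of 0] by simp

sublocale finite_measure \<nu>
  by (rule finite_measureI) (use fin in auto)

lemma int_pow: "integrable \<nu> (\<lambda>t. t ^ n)"
proof (rule integrableI_bounded)
  show "(\<lambda>t. t ^ n) \<in> borel_measurable \<nu>" by simp
  have "(\<integral>\<^sup>+ t. ennreal (norm (t ^ n)) \<partial>\<nu>) \<le> (\<integral>\<^sup>+ t. ennreal 1 + ennreal (t ^ (2*n)) \<partial>\<nu>)"
  proof (rule nn_integral_mono)
    fix t :: real
    have "\<bar>t\<bar> ^ n \<le> 1 + t ^ (2*n)"
    proof (cases "\<bar>t\<bar> \<le> 1")
      case True
      then have "\<bar>t\<bar> ^ n \<le> 1" by (simp add: power_le_one)
      moreover have "0 \<le> t ^ (2*n)" by (simp add: power_mult)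
      ultimately show ?thesis by linarith
    next
      case False
      then have "\<bar>t\<bar> ^ n \<le> \<bar>t\<bar> ^ (2*n)" by (intro power_increasing) auto
      also have "\<dots> = t ^ (2*n)" by (simp add: power_mult power_even_abs)
      finally show ?thesis by linarith
    qed
    then have "ennreal (\<bar>t\<bar> ^ n) \<le> ennreal (1 + t ^ (2*n))" by (rule ennreal_leI)
    also have "\<dots> = ennreal 1 + ennreal (t ^ (2*n))"
      by (rule ennreal_plus) (auto simp: power_mult)
    finally show "ennreal (norm (t ^ n)) \<le> ennreal 1 + ennreal (t ^ (2*n))"
      by (simp add: power_abs)
  qed
  also have "\<dots> = emeasure \<nu> UNIV + (\<integral>\<^sup>+ t. ennreal (t ^ (2*n)) \<partial>\<nu>)"
    by (subst nn_integral_add) auto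
  also have "\<dots> < \<infinity>" using fin even_mom by (simp add: ennreal_add_less_top) 
  finally show "(\<integral>\<^sup>+ t. ennreal (norm (t ^ n)) \<partial>\<nu>) < \<infinity>" .
qed

lemma poly_sq_int: "integrable \<nu> (\<lambda>t. (\<Sum>n\<le>N. a n * t ^ n) ^ 2)"
proof -
  have eq: "(\<Sum>n\<le>N. a n * t ^ n) ^ 2 = (\<Sum>n\<le>N. \<Sum>m\<le>N. (a n * a m) * t ^ (n + m))" for t :: real
    by (simp add: power2_eq_square sum_product power_add mult_ac)
  show ?thesis unfolding eq
    by (intro Bochner_Integration.integrable_sum Bochner_Integration.integrable_mult_right int_pow)
qed

lemma poly_L2: "(\<lambda>t. \<Sum>n\<le>N. a n * t ^ n) \<in> L2 \<nu>"
  unfolding L2_def using poly_sq_int by auto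

definition sS where "sS = supp_sup (restr_pos \<nu>)"

lemma sS_nonneg: "0 \<le> sS"
  by (simp add: sS_def supp_sup_def)

lemma supp_pos:
  assumes t1: "0 \<le> t1" "ereal t1 < sS"
  shows "emeasure \<nu> {t1..} > 0"
proof -
  have "ereal t1 < (SUP x\<in>msupp (restr_pos \<nu>). ereal x)"
    using t1 by (auto simp: sS_def supp_sup_def less_max_iff_disj)
  then obtain x where x: "x \<in> msupp (restr_pos \<nu>)" "t1 < x" by (auto simp: less_SUP_iff)
  then have pos: "emeasure (restr_pos \<nu>) (ball x (x - t1)) > 0" by (auto simp: msupp_def)
  have "emeasure (restr_pos \<nu>) (ball x (x - t1)) \<le> emeasure (restr_pos \<nu>) {t1..}"
    by (rule emeasure_mono) (auto simp: ball_def dist_real_def restr_pos_def)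
  also have "\<dots> = emeasure \<nu> ({t1..} \<inter> {0..})" by (rule restr_emeasure) auto
  also have "{t1..} \<inter> {0..} = {t1..}" using t1 by auto
  finally show ?thesis using pos by simp
qed

lemma null_pos: "emeasure \<nu> {t. 0 \<le> t \<and> sS \<le> ereal t} = 0"
proof -
  have m: "{t. 0 \<le> t \<and> sS \<le> ereal t} \<in> sets borel" by measurable
  have "emeasure \<nu> {t. 0 \<le> t \<and> sS \<le> ereal t} = emeasure \<nu> ({t. 0 \<le> t \<and> sS \<le> ereal t} \<inter> {0..})"
    by (rule arg_cong[where f="emeasure \<nu>"]) auto
  also have "\<dots> = emeasure (restr_pos \<nu>) {t. 0 \<le> t \<and> sS \<le> ereal t}"
    by (rule restr_emeasure[symmetric]) (rule m)
  also have "\<dots> = 0" using no_mass_at_end by (simp add: sS_def)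
  finally show ?thesis .
qed

lemma null_neg: "emeasure \<nu> {t. t < 0 \<and> sS \<le> ereal (- t)} = 0"
proof (cases sS)
  case PInf
  then show ?thesis by simp
next
  case MInf
  then show ?thesis using sS_nonneg by simp
next
  case (real \<sigma>)
  have \<sigma>0: "0 \<le> \<sigma>" using sS_nonneg real by simp
  have setA: "{t. t < 0 \<and> sS \<le> ereal (- t)} = {t. t < 0 \<and> \<sigma> \<le> - t}" using real by auto
  have setP: "{t. 0 \<le> t \<and> sS \<le> ereal t} = {\<sigma>..}" using real \<sigma>0 by auto
  have nullP: "emeasure \<nu> {\<sigma>..} = 0" using null_pos setP by simp
  show ?thesis
  proof (cases "\<sigma> = 0")
    case True
    have e1: "(\<lambda>t. ennreal (t ^ (2*0)) * indicator {..<0} t) = indicator {..<0}" by (simp add: fun_eq_iff)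
    have e2: "(\<lambda>t. ennreal (t ^ (2*0)) * indicator {0..} t) = indicator {0..}" by (simp add: fun_eq_iff)
    have "emeasure \<nu> {..<0} = (\<integral>\<^sup>+ t. ennreal (t ^ (2*0)) * indicator {..<0} t \<partial>\<nu>)"
      unfolding e1 by (rule nn_integral_indicator[symmetric]) simp
    also have "\<dots> \<le> ennreal C * (\<integral>\<^sup>+ t. ennreal (t ^ (2*0)) * indicator {0..} t \<partial>\<nu>)"
      by (rule nb)
    finally have le0: "emeasure \<nu> {..<0} \<le> ennreal C * (\<integral>\<^sup>+ t. ennreal (t ^ (2*0)) * indicator {0..} t \<partial>\<nu>)" .
    have e3: "(\<integral>\<^sup>+ t. ennreal (t ^ (2*0)) * indicator {0..} t \<partial>\<nu>) = emeasure \<nu> {0..}"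
      unfolding e2 by (rule nn_integral_indicator) simp
    have le: "emeasure \<nu> {..<0} \<le> ennreal C * emeasure \<nu> {0..}" using le0 unfolding e3 .
    have "emeasure \<nu> {0..} = 0" using nullP True by simp
    with le have "emeasure \<nu> {..<0} = 0" by simp
    moreover have "{t. t < 0 \<and> sS \<le> ereal (- t)} = {..<0}" using real True by auto
    ultimately show ?thesis by simp
  next
    case False
    then have \<sigma>p: "0 < \<sigma>" using \<sigma>0 by simp
    define A where "A = {t. t < 0 \<and> \<sigma> \<le> - t}"
    have [measurable]: "A \<in> sets borel" unfolding A_def by measurable
    define X where "X n = (\<integral>\<^sup>+ t. ennreal ((t / \<sigma>) ^ (2*n) * indicator {0..<\<sigma>} t) \<partial>\<nu>)" for n
    have bound: "emeasure \<nu> A \<le> ennreal C * X n" for n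
    proof -
      have "emeasure \<nu> A = (\<integral>\<^sup>+ t. indicator A t \<partial>\<nu>)" by simp
      also have "\<dots> \<le> (\<integral>\<^sup>+ t. ennreal (1 / \<sigma> ^ (2*n)) * (ennreal (t ^ (2*n)) * indicator {..<0} t) \<partial>\<nu>)"
      proof (rule nn_integral_mono)
        fix t :: real
        show "indicator A t \<le> ennreal (1 / \<sigma> ^ (2*n)) * (ennreal (t ^ (2*n)) * indicator {..<0} t)"
        proof (cases "t \<in> A")
          case True
          then have t: "t < 0" "\<sigma> \<le> - t" by (auto simp: A_def)
          have "\<sigma> ^ (2*n) \<le> (- t) ^ (2*n)" using t \<sigma>0 by (intro power_mono) auto
          also have "\<dots> = t ^ (2*n)" by (simp add: power_mult)
          finally have "1 \<le> 1 / \<sigma> ^ (2*n) * t ^ (2*n)" using \<sigma>p by (simp add: field_simps)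
          then have "ennreal 1 \<le> ennreal (1 / \<sigma> ^ (2*n) * t ^ (2*n))" by (rule ennreal_leI)
          moreover have "ennreal (1 / \<sigma> ^ (2*n)) * ennreal (t ^ (2*n)) = ennreal (1 / \<sigma> ^ (2*n) * t ^ (2*n))"
            by (rule ennreal_mult[symmetric]) (use \<sigma>p in \<open>auto simp: power_mult\<close>)
          ultimately show ?thesis using True t by (simp add: indicator_def)
        qed simp
      qed
      also have "\<dots> = ennreal (1 / \<sigma> ^ (2*n)) * (\<integral>\<^sup>+ t. ennreal (t ^ (2*n)) * indicator {..<0} t \<partial>\<nu>)"
        by (rule nn_integral_cmult) simp
      also have "\<dots> \<le> ennreal (1 / \<sigma> ^ (2*n)) * (ennreal C * (\<integral>\<^sup>+ t. ennreal (t ^ (2*n)) * indicator {0..} t \<partial>\<nu>))"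
        by (intro mult_left_mono nb) simp
      also have "\<dots> = ennreal C * (ennreal (1 / \<sigma> ^ (2*n)) * (\<integral>\<^sup>+ t. ennreal (t ^ (2*n)) * indicator {0..} t \<partial>\<nu>))"
        by (simp add: mult_ac)
      also have "ennreal (1 / \<sigma> ^ (2*n)) * (\<integral>\<^sup>+ t. ennreal (t ^ (2*n)) * indicator {0..} t \<partial>\<nu>)
          = (\<integral>\<^sup>+ t. ennreal (1 / \<sigma> ^ (2*n)) * (ennreal (t ^ (2*n)) * indicator {0..} t) \<partial>\<nu>)"
        by (rule nn_integral_cmult[symmetric]) simp
      also have "\<dots> = X n"
        unfolding X_def
      proof (rule nn_integral_cong_AE)
        have "AE t in \<nu>. t \<notin> {\<sigma>..}"
          using nullP by (intro AE_not_in) (auto intro: null_setsI)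
        then show "AE t in \<nu>. ennreal (1 / \<sigma> ^ (2*n)) * (ennreal (t ^ (2*n)) * indicator {0..} t) =
            ennreal ((t / \<sigma>) ^ (2*n) * indicator {0..<\<sigma>} t)"
        proof eventually_elim
          case (elim t)
          show ?case
          proof (cases "0 \<le> t")
            case True
            then have "t < \<sigma>" using elim by auto
            have "ennreal (1 / \<sigma> ^ (2*n)) * ennreal (t ^ (2*n)) = ennreal (1 / \<sigma> ^ (2*n) * t ^ (2*n))"
              by (rule ennreal_mult[symmetric]) (use \<sigma>p in \<open>auto simp: power_mult\<close>)
            also have "1 / \<sigma> ^ (2*n) * t ^ (2*n) = (t / \<sigma>) ^ (2*n)" by (simp add: power_divide)
            finally show ?thesis using True \<open>t < \<sigma>\<close> by (simp add: indicator_def)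
          next
            case False
            then show ?thesis by (simp add: indicator_def)
          qed
        qed
      qed
      finally show ?thesis .
    qed
    have lim: "X \<longlonglongrightarrow> 0"
    proof -
      have "(\<lambda>n. (\<integral>\<^sup>+ t. ennreal (norm (0 - (t / \<sigma>) ^ (2*n) * indicator {0..<\<sigma>} t)) \<partial>\<nu>)) \<longlonglongrightarrow> 0"
      proof (rule nn_integral_dominated_convergence_norm[where w="indicator {0..<\<sigma>}"])
        show "(\<lambda>x. (x / \<sigma>) ^ (2 * n) * indicator {0..<\<sigma>} x) \<in> borel_measurable \<nu>" for n by simp
        show "(\<lambda>x. 0::real) \<in> borel_measurable \<nu>" by simp
        show "(indicator {0..<\<sigma>} :: real \<Rightarrow> real) \<in> borel_measurable \<nu>" by simp
        show "AE x in \<nu>. norm ((x / \<sigma>) ^ (2 * n) * indicator {0..<\<sigma>} x) \<le> indicator {0..<\<sigma>} x" for n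
        proof (rule AE_I2)
          fix x :: real
          show "norm ((x / \<sigma>) ^ (2 * n) * indicator {0..<\<sigma>} x) \<le> indicator {0..<\<sigma>} x"
          proof (cases "x \<in> {0..<\<sigma>}")
            case True
            then have "\<bar>x / \<sigma>\<bar> ^ (2*n) \<le> 1" using \<sigma>p by (intro power_le_one) auto
            then show ?thesis using True by (simp add: power_abs)
          qed simp
        qed
        show "(\<integral>\<^sup>+ x. ennreal (indicator {0..<\<sigma>} x) \<partial>\<nu>) < \<infinity>"
          by (simp add: ennreal_indicator less_top[symmetric])
        show "AE x in \<nu>. (\<lambda>n. (x / \<sigma>) ^ (2 * n) * indicator {0..<\<sigma>} x) \<longlonglongrightarrow> 0"
        proof (rule AE_I2)
          fix x :: real
          show "(\<lambda>n. (x / \<sigma>) ^ (2 * n) * indicator {0..<\<sigma>} x) \<longlonglongrightarrow> 0"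
          proof (cases "x \<in> {0..<\<sigma>}")
            case True
            then have h: "0 \<le> x / \<sigma>" "x / \<sigma> < 1" using \<sigma>p by auto
            then have "(x / \<sigma>)^2 < 1 ^ 2" by (intro power_strict_mono) auto
            then have "\<bar>(x / \<sigma>)^2\<bar> < 1" by simp
            then have "(\<lambda>n. ((x / \<sigma>)^2) ^ n) \<longlonglongrightarrow> 0" by (rule LIMSEQ_abs_realpow_zero2)
            then show ?thesis using True by (simp add: power_mult)
          qed simp
        qed
      qed
      moreover have "(\<integral>\<^sup>+ t. ennreal (norm (0 - (t / \<sigma>) ^ (2*n) * indicator {0..<\<sigma>} t)) \<partial>\<nu>) = X n" for n
        unfolding X_def by (rule nn_integral_cong) (auto simp: indicator_def power_mult)
      ultimately show ?thesis by simp
    qed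
    have "emeasure \<nu> A \<le> ennreal C * 0"
      by (rule tendsto_lowerbound[OF tendsto_mult_ennreal[OF tendsto_const lim]]) (use bound in auto)
    then show ?thesis using setA by (simp add: A_def)
  qed
qed

lemma AE_in: "AE t in \<nu>. ereal \<bar>t\<bar> < sS"
proof (rule AE_I')
  show "{t. 0 \<le> t \<and> sS \<le> ereal t} \<union> {t. t < 0 \<and> sS \<le> ereal (- t)} \<in> null_sets \<nu>"
  proof (intro null_sets.Un null_setsI)
    show "{t. 0 \<le> t \<and> sS \<le> ereal t} \<in> sets \<nu>" by simp measurable
    show "{t. t < 0 \<and> sS \<le> ereal (- t)} \<in> sets \<nu>" by simp measurable
  qed (fact null_pos null_neg)+
  show "{x \<in> space \<nu>. \<not> ereal \<bar>x\<bar> < sS} \<subseteq> {t. 0 \<le> t \<and> sS \<le> ereal t} \<union> {t. t < 0 \<and> sS \<le> ereal (- t)}"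
  proof
    fix x assume "x \<in> {x \<in> space \<nu>. \<not> ereal \<bar>x\<bar> < sS}"
    then have x: "sS \<le> ereal \<bar>x\<bar>" by (simp add: not_less)
    show "x \<in> {t. 0 \<le> t \<and> sS \<le> ereal t} \<union> {t. t < 0 \<and> sS \<le> ereal (- t)}"
    proof (cases "0 \<le> x")
      case True then show ?thesis using x by simp
    next
      case False then show ?thesis using x by simp
    qed
  qed
qed

lemma meas_pos: "0 \<le> t1 \<Longrightarrow> ereal t1 < sS \<Longrightarrow> measure \<nu> {t1..} > 0"
  using supp_pos[of t1] by (simp add: emeasure_eq_measure ennreal_less_zero_iff)

lemma coef_bound:
  assumes a: "\<forall>n. 0 \<le> a n" and L: "L2_tendsto \<nu> (\<lambda>N t. \<Sum>n\<le>N. a n * t ^ n) F" and t1: "0 \<le> t1"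
  shows "(a n * t1 ^ n) ^ 2 * measure \<nu> {t1..} \<le> (\<integral>t. (F t) ^ 2 \<partial>\<nu>)"
proof -
  obtain r where r: "strict_mono r" and ae: "AE t in \<nu>. (\<lambda>j. \<Sum>k\<le>r j. a k * t ^ k) \<longlonglongrightarrow> F t"
    using L2_sub_AE[OF L] by auto
  have FL: "F \<in> L2 \<nu>" using L by (simp add: L2_tendsto_def)
  have ptw: "AE t in \<nu>. (a n * t1 ^ n) ^ 2 * indicator {t1..} t \<le> (F t) ^ 2"
    using ae
  proof eventually_elim
    case (elim t)
    show ?case
    proof (cases "t1 \<le> t")
      case True
      have ev: "eventually (\<lambda>j. a n * t1 ^ n \<le> (\<Sum>k\<le>r j. a k * t ^ k)) sequentially"
      proof (rule eventually_sequentiallyI[of n])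
        fix j assume "n \<le> j"
        then have nj: "n \<le> r j" using seq_suble[OF r, of j] by simp
        have "a n * t1 ^ n \<le> a n * t ^ n"
          using a t1 True by (intro mult_left_mono power_mono) auto
        also have "\<dots> \<le> (\<Sum>k\<le>r j. a k * t ^ k)"
          by (rule member_le_sum) (use nj a t1 True in auto)
        finally show "a n * t1 ^ n \<le> (\<Sum>k\<le>r j. a k * t ^ k)" .
      qed
      have le: "a n * t1 ^ n \<le> F t"
        by (rule tendsto_lowerbound[OF elim ev]) simp
      have "(a n * t1 ^ n) ^ 2 \<le> (F t) ^ 2"
        using a t1 le by (intro power_mono) auto
      then show ?thesis using True by simp
    next
      case False
      then show ?thesis by simp
    qed
  qed
  have "(\<integral>t. (a n * t1 ^ n) ^ 2 * indicator {t1..} t \<partial>\<nu>) \<le> (\<integral>t. (F t) ^ 2 \<partial>\<nu>)"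
  proof (rule integral_mono_AE)
    show "integrable \<nu> (\<lambda>t. (a n * t1 ^ n) ^ 2 * indicator {t1..} t)"
      by (intro Bochner_Integration.integrable_mult_right integrable_real_indicator) (simp_all add: less_top[symmetric])
    show "integrable \<nu> (\<lambda>t. (F t) ^ 2)" using FL by (simp add: L2_def)
  qed (rule ptw)
  also have "(\<integral>t. (a n * t1 ^ n) ^ 2 * indicator {t1..} t \<partial>\<nu>) = (a n * t1 ^ n) ^ 2 * measure \<nu> {t1..}"
    by simp
  finally show ?thesis .
qed

end

lemma geom_bound:
  fixes c t t1 m B :: real
  assumes "0 \<le> c" "0 < t1" "0 < m" "(c * t1 ^ n) ^ 2 * m \<le> B"
  shows "\<bar>c * t ^ n\<bar> \<le> sqrt (B / m) * (\<bar>t\<bar> / t1) ^ n"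
proof -
  have "(c * t1 ^ n) ^ 2 \<le> B / m" using assms by (simp add: pos_le_divide_eq)
  then have "sqrt ((c * t1 ^ n) ^ 2) \<le> sqrt (B / m)" by (rule real_sqrt_le_mono)
  then have h: "c * t1 ^ n \<le> sqrt (B / m)" using assms by simp
  have "\<bar>c * t ^ n\<bar> = (c * t1 ^ n) * (\<bar>t\<bar> / t1) ^ n"
    using assms by (simp add: abs_mult power_abs power_divide)
  also have "\<dots> \<le> sqrt (B / m) * (\<bar>t\<bar> / t1) ^ n"
    using h assms by (intro mult_right_mono) auto
  finally show ?thesis .
qed

lemma geom_summable:
  fixes t t1 D :: real
  assumes "\<bar>t\<bar> < t1"
  shows "summable (\<lambda>n. D * (\<bar>t\<bar> / t1) ^ n)"
proof -
  have "norm (\<bar>t\<bar> / t1) < 1" using assms by auto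
  then show ?thesis by (intro summable_mult summable_geometric)
qed

context CS begin

lemma series_ptwise:
  assumes a: "\<forall>n. 0 \<le> a n" and L: "L2_tendsto \<nu> (\<lambda>N t. \<Sum>n\<le>N. a n * t ^ n) F"
  shows "AE t in \<nu>. (\<lambda>n. a n * t ^ n) sums F t"
proof -
  obtain r where r: "strict_mono r" and ae: "AE t in \<nu>. (\<lambda>j. \<Sum>k\<le>r j. a k * t ^ k) \<longlonglongrightarrow> F t"
    using L2_sub_AE[OF L] by auto
  show ?thesis
    using ae AE_in
  proof eventually_elim
    case (elim t)
    obtain t1 where t1: "ereal \<bar>t\<bar> < ereal t1" "ereal t1 < sS"
      using ereal_dense2[OF elim(2)] by auto
    have t1': "\<bar>t\<bar> < t1" "0 < t1" using t1 by auto
    define m where "m = measure \<nu> {t1..}"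
    have m: "0 < m" unfolding m_def using meas_pos t1 t1' by auto
    have cb: "(a n * t1 ^ n) ^ 2 * m \<le> (\<integral>t. (F t) ^ 2 \<partial>\<nu>)" for n
      unfolding m_def by (rule coef_bound[OF a L]) (use t1' in auto)
    have "summable (\<lambda>n. a n * t ^ n)"
    proof (rule summable_comparison_test)
      show "\<exists>N. \<forall>n\<ge>N. norm (a n * t ^ n) \<le> sqrt ((\<integral>t. (F t) ^ 2 \<partial>\<nu>) / m) * (\<bar>t\<bar> / t1) ^ n"
        using geom_bound[OF _ t1'(2) m cb] a by auto
      show "summable (\<lambda>n. sqrt ((\<integral>t. (F t) ^ 2 \<partial>\<nu>) / m) * (\<bar>t\<bar> / t1) ^ n)"
        by (rule geom_summable) (rule t1')
    qed
    then have "(\<lambda>N. \<Sum>k\<le>N. a k * t ^ k) \<longlonglongrightarrow> (\<Sum>n. a n * t ^ n)"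
      by (simp add: summable_sums sums_def_le[symmetric])
    then have "(\<lambda>j. \<Sum>k\<le>r j. a k * t ^ k) \<longlonglongrightarrow> (\<Sum>n. a n * t ^ n)"
      using LIMSEQ_subseq_LIMSEQ[OF _ r] by (auto simp: o_def)
    then have "F t = (\<Sum>n. a n * t ^ n)" using elim(1) LIMSEQ_unique by blast
    then show ?case using \<open>summable (\<lambda>n. a n * t ^ n)\<close> by (simp add: summable_sums)
  qed
qed

lemma NB_expand:
  assumes I: "finite I" and w: "\<forall>i\<in>I. 0 \<le> w i" and S: "S \<in> sets borel"
  shows "(\<integral>\<^sup>+ t. ennreal (\<Sum>i\<in>I. w i * t ^ (2 * e i)) * indicator S t \<partial>\<nu>) =
    (\<Sum>i\<in>I. ennreal (w i) * (\<integral>\<^sup>+ t. ennreal (t ^ (2 * e i)) * indicator S t \<partial>\<nu>))"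
proof -
  have "(\<integral>\<^sup>+ t. ennreal (\<Sum>i\<in>I. w i * t ^ (2 * e i)) * indicator S t \<partial>\<nu>) =
     (\<integral>\<^sup>+ t. (\<Sum>i\<in>I. ennreal (w i) * (ennreal (t ^ (2 * e i)) * indicator S t)) \<partial>\<nu>)"
  proof (rule nn_integral_cong)
    fix t :: real
    have "ennreal (\<Sum>i\<in>I. w i * t ^ (2 * e i)) = (\<Sum>i\<in>I. ennreal (w i * t ^ (2 * e i)))"
      by (rule sum_ennreal[symmetric]) (use w in \<open>auto simp: power_mult\<close>)
    also have "\<dots> = (\<Sum>i\<in>I. ennreal (w i) * ennreal (t ^ (2 * e i)))"
      by (rule sum.cong) (use w in \<open>auto simp: power_mult ennreal_mult\<close>)
    finally show "ennreal (\<Sum>i\<in>I. w i * t ^ (2 * e i)) * indicator S t =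
        (\<Sum>i\<in>I. ennreal (w i) * (ennreal (t ^ (2 * e i)) * indicator S t))"
      by (simp add: sum_distrib_right mult.assoc)
  qed
  also have "\<dots> = (\<Sum>i\<in>I. (\<integral>\<^sup>+ t. ennreal (w i) * (ennreal (t ^ (2 * e i)) * indicator S t) \<partial>\<nu>))"
    by (rule nn_integral_sum) (use S in auto)
  also have "\<dots> = (\<Sum>i\<in>I. ennreal (w i) * (\<integral>\<^sup>+ t. ennreal (t ^ (2 * e i)) * indicator S t \<partial>\<nu>))"
    by (rule sum.cong) (use S in \<open>auto intro!: nn_integral_cmult\<close>)
  finally show ?thesis .
qed

lemma NB:
  assumes I: "finite I" and w: "\<forall>i\<in>I. 0 \<le> w i"
  shows "(\<integral>\<^sup>+ t. ennreal (\<Sum>i\<in>I. w i * t ^ (2 * e i)) * indicator {..<0} t \<partial>\<nu>) \<le>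
    ennreal C * (\<integral>\<^sup>+ t. ennreal (\<Sum>i\<in>I. w i * t ^ (2 * e i)) * indicator {0..} t \<partial>\<nu>)"
proof -
  have "(\<integral>\<^sup>+ t. ennreal (\<Sum>i\<in>I. w i * t ^ (2 * e i)) * indicator {..<0} t \<partial>\<nu>) =
    (\<Sum>i\<in>I. ennreal (w i) * (\<integral>\<^sup>+ t. ennreal (t ^ (2 * e i)) * indicator {..<0} t \<partial>\<nu>))"
    by (rule NB_expand[OF I w]) simp
  also have "\<dots> \<le> (\<Sum>i\<in>I. ennreal (w i) * (ennreal C * (\<integral>\<^sup>+ t. ennreal (t ^ (2 * e i)) * indicator {0..} t \<partial>\<nu>)))"
    by (intro sum_mono mult_left_mono nb) simp
  also have "\<dots> = ennreal C * (\<Sum>i\<in>I. ennreal (w i) * (\<integral>\<^sup>+ t. ennreal (t ^ (2 * e i)) * indicator {0..} t \<partial>\<nu>))"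
    by (simp add: sum_distrib_left mult_ac)
  also have "(\<Sum>i\<in>I. ennreal (w i) * (\<integral>\<^sup>+ t. ennreal (t ^ (2 * e i)) * indicator {0..} t \<partial>\<nu>)) =
     (\<integral>\<^sup>+ t. ennreal (\<Sum>i\<in>I. w i * t ^ (2 * e i)) * indicator {0..} t \<partial>\<nu>)"
    by (rule NB_expand[OF I w, symmetric]) simp
  finally show ?thesis .
qed

end

lemma sq_expand:
  fixes c :: "nat \<Rightarrow> real"
  shows "(\<Sum>i\<le>N. c i * u ^ (k i)) ^ 2 = (\<Sum>p\<in>{..N}\<times>{..N}. (c (fst p) * c (snd p)) * u ^ (k (fst p) + k (snd p)))"
proof -
  have "(\<Sum>i\<le>N. c i * u ^ (k i)) ^ 2 = (\<Sum>i\<le>N. \<Sum>j\<le>N. (c i * u ^ (k i)) * (c j * u ^ (k j)))"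
    by (simp add: power2_eq_square sum_product)
  also have "\<dots> = (\<Sum>p\<in>{..N}\<times>{..N}. (c (fst p) * u ^ (k (fst p))) * (c (snd p) * u ^ (k (snd p))))"
    by (simp add: sum.cartesian_product case_prod_beta)
  also have "\<dots> = (\<Sum>p\<in>{..N}\<times>{..N}. (c (fst p) * c (snd p)) * u ^ (k (fst p) + k (snd p)))"
    by (rule sum.cong) (simp_all add: power_add mult_ac)
  finally show ?thesis .
qed

lemma sum_split_parity:
  fixes h :: "nat \<Rightarrow> real"
  shows "(\<Sum>n\<le>2*N+1. h n) = (\<Sum>i\<le>N. h (2*i)) + (\<Sum>i\<le>N. h (2*i+1))"
proof (induction N)
  case 0
  then show ?case by simp
next
  case (Suc N)
  have "(\<Sum>n\<le>2*Suc N+1. h n) = (\<Sum>n\<le>2*N+1. h n) + h (2*N+2) + h (2*N+3)"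
    by (simp add: numeral_3_eq_3)
  then show ?case using Suc by simp
qed

context CS begin

lemma dom_int:
  assumes b: "\<forall>n. 0 \<le> b n"
    and gL2: "g \<in> L2 \<nu>"
    and gf: "AE t in \<nu>. g t = (\<Sum>n. b n * t ^ n)"
    and bs: "\<forall>t. ereal \<bar>t\<bar> < sS \<longrightarrow> summable (\<lambda>n. \<bar>b n * t ^ n\<bar>)"
  shows "(\<integral>\<^sup>+ t. ennreal ((\<Sum>n. b n * \<bar>t\<bar> ^ n) ^ 2) \<partial>\<nu>) < \<infinity>"
proof -
  define P where "P = (\<lambda>t::real. \<Sum>n. b n * \<bar>t\<bar> ^ n)"
  define R where "R = (\<lambda>N (t::real). \<Sum>n\<le>2*N+1. b n * \<bar>t\<bar> ^ n)"
  define E where "E = (\<lambda>N (t::real). \<Sum>i\<le>N. b (2*i) * t ^ (2*i))"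
  define Od where "Od = (\<lambda>N (t::real). \<Sum>i\<le>N. b (2*i+1) * \<bar>t\<bar> ^ (2*i+1))"
  have [measurable]: "E N \<in> borel_measurable borel" "Od N \<in> borel_measurable borel" "R N \<in> borel_measurable borel" for N
    unfolding E_def Od_def R_def by measurable
  have [measurable]: "g \<in> borel_measurable borel" using gL2 by (simp add: L2_def)
  have RE: "R N t = E N t + Od N t" for N t
  proof -
    have "R N t = (\<Sum>i\<le>N. b (2*i) * \<bar>t\<bar> ^ (2*i)) + Od N t"
      unfolding R_def Od_def by (rule sum_split_parity)
    also have "(\<Sum>i\<le>N. b (2*i) * \<bar>t\<bar> ^ (2*i)) = E N t"
      unfolding E_def by (rule sum.cong) (simp_all add: power_even_abs)
    finally show ?thesis .
  qed
  have Enn: "0 \<le> E N t" for N t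
    unfolding E_def using b by (intro sum_nonneg mult_nonneg_nonneg) (auto simp: power_mult)
  have Odnn: "0 \<le> Od N t" for N t
    unfolding Od_def using b by (intro sum_nonneg mult_nonneg_nonneg) auto
  have Rg: "AE t in \<nu>. 0 \<le> t \<longrightarrow> R N t \<le> g t" for N
    using gf AE_in
  proof eventually_elim
    case (elim t)
    show ?case
    proof
      assume t: "0 \<le> t"
      have sm: "summable (\<lambda>n. b n * t ^ n)"
        using bs elim(2) by (auto intro: summable_rabs_cancel)
      have "R N t = (\<Sum>n\<le>2*N+1. b n * t ^ n)" unfolding R_def using t by simp
      also have "\<dots> \<le> (\<Sum>n. b n * t ^ n)"
        by (rule sum_le_suminf[OF sm]) (use b t in auto)
      finally show "R N t \<le> g t" using elim(1) by simp
    qed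
  qed
  define G where "G = (\<integral>\<^sup>+ t. ennreal ((g t) ^ 2) \<partial>\<nu>)"
  have G: "G < \<infinity>"
  proof -
    have "integrable \<nu> (\<lambda>t. (g t) ^ 2)" using gL2 by (simp add: L2_def)
    then have "(\<integral>\<^sup>+ t. ennreal (norm ((g t) ^ 2)) \<partial>\<nu>) < \<infinity>" by (simp add: integrable_iff_bounded)
    then show ?thesis by (simp add: G_def)
  qed
  have Epos: "(\<integral>\<^sup>+ t. ennreal ((E N t) ^ 2) * indicator {0..} t \<partial>\<nu>) \<le> G" for N
    unfolding G_def
  proof (rule nn_integral_mono_AE)
    show "AE t in \<nu>. ennreal ((E N t) ^ 2) * indicator {0..} t \<le> ennreal ((g t) ^ 2)"
      using Rg[of N]
    proof eventually_elim
      case (elim t)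
      show ?case
      proof (cases "0 \<le> t")
        case True
        then have "E N t \<le> g t" using elim RE[of N t] Odnn[of N t] by simp
        then have "(E N t) ^ 2 \<le> (g t) ^ 2" using Enn[of N t] by (intro power_mono) auto
        then show ?thesis using True by (simp add: ennreal_leI)
      qed simp
    qed
  qed
  have Odpos: "(\<integral>\<^sup>+ t. ennreal ((Od N t) ^ 2) * indicator {0..} t \<partial>\<nu>) \<le> G" for N
    unfolding G_def
  proof (rule nn_integral_mono_AE)
    show "AE t in \<nu>. ennreal ((Od N t) ^ 2) * indicator {0..} t \<le> ennreal ((g t) ^ 2)"
      using Rg[of N]
    proof eventually_elim
      case (elim t)
      show ?case
      proof (cases "0 \<le> t")
        case True
        then have "Od N t \<le> g t" using elim RE[of N t] Enn[of N t] by simp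
        then have "(Od N t) ^ 2 \<le> (g t) ^ 2" using Odnn[of N t] by (intro power_mono) auto
        then show ?thesis using True by (simp add: ennreal_leI)
      qed simp
    qed
  qed
  have Eexp: "(E N t) ^ 2 = (\<Sum>p\<in>{..N}\<times>{..N}. (b (2 * fst p) * b (2 * snd p)) * t ^ (2 * (fst p + snd p)))" for N t
    unfolding E_def by (subst sq_expand) (simp add: distrib_left)
  have Oexp: "(Od N t) ^ 2 = (\<Sum>p\<in>{..N}\<times>{..N}. (b (2 * fst p + 1) * b (2 * snd p + 1)) * t ^ (2 * (fst p + snd p + 1)))" for N t
  proof -
    have "(Od N t) ^ 2 = (\<Sum>p\<in>{..N}\<times>{..N}. (b (2 * fst p + 1) * b (2 * snd p + 1)) * \<bar>t\<bar> ^ ((2 * fst p + 1) + (2 * snd p + 1)))"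
      unfolding Od_def by (rule sq_expand)
    also have "\<dots> = (\<Sum>p\<in>{..N}\<times>{..N}. (b (2 * fst p + 1) * b (2 * snd p + 1)) * t ^ (2 * (fst p + snd p + 1)))"
    proof (rule sum.cong)
      fix p :: "nat \<times> nat"
      have "(2 * fst p + 1) + (2 * snd p + 1) = 2 * (fst p + snd p + 1)" by simp
      then have "\<bar>t\<bar> ^ ((2 * fst p + 1) + (2 * snd p + 1)) = t ^ (2 * (fst p + snd p + 1))"
        by (simp only: power_even_abs even_mult_iff even_numeral simp_thms)
      then show "(b (2 * fst p + 1) * b (2 * snd p + 1)) * \<bar>t\<bar> ^ ((2 * fst p + 1) + (2 * snd p + 1)) =
          (b (2 * fst p + 1) * b (2 * snd p + 1)) * t ^ (2 * (fst p + snd p + 1))" by simp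
    qed simp
    finally show ?thesis .
  qed
  have Eneg: "(\<integral>\<^sup>+ t. ennreal ((E N t) ^ 2) * indicator {..<0} t \<partial>\<nu>) \<le>
      ennreal C * (\<integral>\<^sup>+ t. ennreal ((E N t) ^ 2) * indicator {0..} t \<partial>\<nu>)" for N
    unfolding Eexp by (rule NB) (use b in auto)
  have Oneg: "(\<integral>\<^sup>+ t. ennreal ((Od N t) ^ 2) * indicator {..<0} t \<partial>\<nu>) \<le>
      ennreal C * (\<integral>\<^sup>+ t. ennreal ((Od N t) ^ 2) * indicator {0..} t \<partial>\<nu>)" for N
    unfolding Oexp by (rule NB) (use b in auto)
  define K where "K = ennreal C * G + G"
  have EK: "(\<integral>\<^sup>+ t. ennreal ((E N t) ^ 2) \<partial>\<nu>) \<le> K" for N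
  proof -
    have "(\<integral>\<^sup>+ t. ennreal ((E N t) ^ 2) \<partial>\<nu>) = (\<integral>\<^sup>+ t. ennreal ((E N t) ^ 2) * indicator {..<0} t \<partial>\<nu>)
       + (\<integral>\<^sup>+ t. ennreal ((E N t) ^ 2) * indicator {0..} t \<partial>\<nu>)"
      by (rule split_int) simp
    also have "\<dots> \<le> ennreal C * (\<integral>\<^sup>+ t. ennreal ((E N t) ^ 2) * indicator {0..} t \<partial>\<nu>) + (\<integral>\<^sup>+ t. ennreal ((E N t) ^ 2) * indicator {0..} t \<partial>\<nu>)"
      by (rule add_right_mono) (rule Eneg)
    also have "\<dots> \<le> K" unfolding K_def
      by (intro add_mono mult_left_mono Epos) simp_all
    finally show ?thesis .
  qed
  have OdK: "(\<integral>\<^sup>+ t. ennreal ((Od N t) ^ 2) \<partial>\<nu>) \<le> K" for N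
  proof -
    have "(\<integral>\<^sup>+ t. ennreal ((Od N t) ^ 2) \<partial>\<nu>) = (\<integral>\<^sup>+ t. ennreal ((Od N t) ^ 2) * indicator {..<0} t \<partial>\<nu>)
       + (\<integral>\<^sup>+ t. ennreal ((Od N t) ^ 2) * indicator {0..} t \<partial>\<nu>)"
      by (rule split_int) simp
    also have "\<dots> \<le> ennreal C * (\<integral>\<^sup>+ t. ennreal ((Od N t) ^ 2) * indicator {0..} t \<partial>\<nu>) + (\<integral>\<^sup>+ t. ennreal ((Od N t) ^ 2) * indicator {0..} t \<partial>\<nu>)"
      by (rule add_right_mono) (rule Oneg)
    also have "\<dots> \<le> K" unfolding K_def
      by (intro add_mono mult_left_mono Odpos) simp_all
    finally show ?thesis .
  qed
  have RK: "(\<integral>\<^sup>+ t. ennreal ((R N t) ^ 2) \<partial>\<nu>) \<le> 2 * K + 2 * K" for N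
  proof -
    have "(\<integral>\<^sup>+ t. ennreal ((R N t) ^ 2) \<partial>\<nu>) \<le> (\<integral>\<^sup>+ t. 2 * ennreal ((E N t) ^ 2) + 2 * ennreal ((Od N t) ^ 2) \<partial>\<nu>)"
    proof (rule nn_integral_mono)
      fix t
      have "(R N t) ^ 2 \<le> 2 * (E N t) ^ 2 + 2 * (Od N t) ^ 2" unfolding RE by (rule sq_ineq)
      then have "ennreal ((R N t) ^ 2) \<le> ennreal (2 * (E N t) ^ 2 + 2 * (Od N t) ^ 2)" by (rule ennreal_leI)
      also have "\<dots> = 2 * ennreal ((E N t) ^ 2) + 2 * ennreal ((Od N t) ^ 2)"
        by (simp add: ennreal_plus ennreal_mult)
      finally show "ennreal ((R N t) ^ 2) \<le> 2 * ennreal ((E N t) ^ 2) + 2 * ennreal ((Od N t) ^ 2)" .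
    qed
    also have "\<dots> = 2 * (\<integral>\<^sup>+ t. ennreal ((E N t) ^ 2) \<partial>\<nu>) + 2 * (\<integral>\<^sup>+ t. ennreal ((Od N t) ^ 2) \<partial>\<nu>)"
      by (simp add: nn_integral_add nn_integral_cmult)
    also have "\<dots> \<le> 2 * K + 2 * K"
      by (intro add_mono mult_left_mono EK OdK) simp_all
    finally show ?thesis .
  qed
  have lim: "AE t in \<nu>. (\<lambda>N. ennreal ((R N t) ^ 2)) \<longlonglongrightarrow> ennreal ((P t) ^ 2)"
    using AE_in
  proof eventually_elim
    case (elim t)
    have sm: "summable (\<lambda>n. b n * \<bar>t\<bar> ^ n)"
      using bs elim b by (simp add: abs_mult power_abs)
    then have "(\<lambda>M. \<Sum>n\<le>M. b n * \<bar>t\<bar> ^ n) \<longlonglongrightarrow> P t"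
      unfolding P_def by (simp add: summable_sums sums_def_le[symmetric])
    moreover have "strict_mono (\<lambda>N::nat. 2*N+1)" by (simp add: strict_mono_def)
    ultimately have "((\<lambda>M. \<Sum>n\<le>M. b n * \<bar>t\<bar> ^ n) \<circ> (\<lambda>N. 2*N+1)) \<longlonglongrightarrow> P t"
      by (rule LIMSEQ_subseq_LIMSEQ)
    then have "(\<lambda>N. \<Sum>n\<le>2*N+1. b n * \<bar>t\<bar> ^ n) \<longlonglongrightarrow> P t"
      by (simp only: o_def)
    then have "(\<lambda>N. R N t) \<longlonglongrightarrow> P t" unfolding R_def .
    then show ?case by (intro tendsto_ennrealI tendsto_power)
  qed
  have "(\<integral>\<^sup>+ t. ennreal ((P t) ^ 2) \<partial>\<nu>) = (\<integral>\<^sup>+ t. liminf (\<lambda>N. ennreal ((R N t) ^ 2)) \<partial>\<nu>)"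
  proof (rule nn_integral_cong_AE)
    show "AE t in \<nu>. ennreal ((P t) ^ 2) = liminf (\<lambda>N. ennreal ((R N t) ^ 2))"
      using lim by eventually_elim (rule lim_imp_Liminf[symmetric], simp_all)
  qed
  also have "\<dots> \<le> liminf (\<lambda>N. (\<integral>\<^sup>+ t. ennreal ((R N t) ^ 2) \<partial>\<nu>))"
    by (rule nn_integral_liminf) simp
  also have "\<dots> \<le> 2 * K + 2 * K"
    by (rule Liminf_le) (use RK in auto)
  also have "\<dots> < \<infinity>"
    using G C_pos unfolding K_def by (simp add: ennreal_mult_less_top ennreal_add_less_top)
  finally show ?thesis unfolding P_def .
qed

lemma final_conv:
  assumes b: "\<forall>n. 0 \<le> b n"
    and gL2: "g \<in> L2 \<nu>"
    and gf: "AE t in \<nu>. g t = (\<Sum>n. b n * t ^ n)"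
    and bs: "\<forall>t. ereal \<bar>t\<bar> < sS \<longrightarrow> summable (\<lambda>n. \<bar>b n * t ^ n\<bar>)"
  shows "L2_tendsto \<nu> (\<lambda>N t. \<Sum>n\<le>N. b n * t ^ n) g"
  unfolding L2_tendsto_def
proof (intro conjI allI)
  show "(\<lambda>t. \<Sum>n\<le>N. b n * t ^ n) \<in> L2 \<nu>" for N by (rule poly_L2)
  show "g \<in> L2 \<nu>" by (rule gL2)
  define f where "f = (\<lambda>t::real. \<Sum>n. b n * t ^ n)"
  define P where "P = (\<lambda>t::real. \<Sum>n. b n * \<bar>t\<bar> ^ n)"
  have abs_eq: "\<bar>b n * t ^ n\<bar> = b n * \<bar>t\<bar> ^ n" for n t using b by (simp add: abs_mult power_abs)
  have [measurable]: "f \<in> borel_measurable borel" "P \<in> borel_measurable borel"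
    unfolding f_def P_def by measurable
  have eq: "(\<integral>\<^sup>+ t. ennreal (((\<Sum>n\<le>N. b n * t ^ n) - g t) ^ 2) \<partial>\<nu>) =
      (\<integral>\<^sup>+ t. ennreal (norm (0 - ((\<Sum>n\<le>N. b n * t ^ n) - f t) ^ 2)) \<partial>\<nu>)" for N
    by (rule nn_integral_cong_AE) (use gf in \<open>auto simp: f_def\<close>)
  have "(\<lambda>N. (\<integral>\<^sup>+ t. ennreal (norm (0 - ((\<Sum>n\<le>N. b n * t ^ n) - f t) ^ 2)) \<partial>\<nu>)) \<longlonglongrightarrow> 0"
  proof (rule nn_integral_dominated_convergence_norm[where w="\<lambda>t. 4 * (P t) ^ 2"])
    show "(\<lambda>t. ((\<Sum>n\<le>N. b n * t ^ n) - f t) ^ 2) \<in> borel_measurable \<nu>" for N by simp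
    show "(\<lambda>t. 0::real) \<in> borel_measurable \<nu>" by simp
    show "(\<lambda>t. 4 * (P t) ^ 2) \<in> borel_measurable \<nu>" by simp
    show "AE t in \<nu>. norm (((\<Sum>n\<le>N. b n * t ^ n) - f t) ^ 2) \<le> 4 * (P t) ^ 2" for N
      using AE_in
    proof eventually_elim
      case (elim t)
      have sa: "summable (\<lambda>n. \<bar>b n * t ^ n\<bar>)" using bs elim by auto
      have "\<bar>\<Sum>n\<le>N. b n * t ^ n\<bar> \<le> (\<Sum>n\<le>N. \<bar>b n * t ^ n\<bar>)" by (rule sum_abs)
      also have "\<dots> \<le> (\<Sum>n. \<bar>b n * t ^ n\<bar>)" by (rule sum_le_suminf[OF sa]) auto
      finally have h1: "\<bar>\<Sum>n\<le>N. b n * t ^ n\<bar> \<le> P t" unfolding P_def abs_eq .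
      have h2: "\<bar>f t\<bar> \<le> P t" unfolding f_def P_def using summable_rabs[OF sa] by (simp add: abs_eq)
      have "\<bar>(\<Sum>n\<le>N. b n * t ^ n) - f t\<bar> \<le> 2 * P t" using h1 h2 by linarith
      then have "\<bar>(\<Sum>n\<le>N. b n * t ^ n) - f t\<bar> ^ 2 \<le> (2 * P t) ^ 2" by (intro power_mono) auto
      then show ?case by (simp add: power_mult_distrib)
    qed
    have "(\<integral>\<^sup>+ t. ennreal (4 * (P t) ^ 2) \<partial>\<nu>) = (\<integral>\<^sup>+ t. 4 * ennreal ((P t) ^ 2) \<partial>\<nu>)"
      by (rule nn_integral_cong) (simp add: ennreal_mult)
    also have "\<dots> = 4 * (\<integral>\<^sup>+ t. ennreal ((P t) ^ 2) \<partial>\<nu>)"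
      by (rule nn_integral_cmult) simp
    also have "\<dots> < \<infinity>"
      using dom_int[OF b gL2 gf bs] unfolding P_def by (simp add: ennreal_mult_less_top)
    finally show "(\<integral>\<^sup>+ t. ennreal (4 * (P t) ^ 2) \<partial>\<nu>) < \<infinity>" .
    show "AE t in \<nu>. (\<lambda>N. ((\<Sum>n\<le>N. b n * t ^ n) - f t) ^ 2) \<longlonglongrightarrow> 0"
      using AE_in
    proof eventually_elim
      case (elim t)
      have "summable (\<lambda>n. b n * t ^ n)" using bs elim by (auto intro: summable_rabs_cancel)
      then have "(\<lambda>N. \<Sum>n\<le>N. b n * t ^ n) \<longlonglongrightarrow> f t"
        unfolding f_def by (simp add: summable_sums sums_def_le[symmetric])
      then have "(\<lambda>N. ((\<Sum>n\<le>N. b n * t ^ n) - f t) ^ 2) \<longlonglongrightarrow> (f t - f t) ^ 2"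
        by (intro tendsto_intros)
      then show ?case by simp
    qed
  qed
  then show "(\<lambda>N. \<integral>\<^sup>+ t. ennreal (((\<Sum>n\<le>N. b n * t ^ n) - g t) ^ 2) \<partial>\<nu>) \<longlonglongrightarrow> 0"
    unfolding eq .
qed

end

lemma L2_int_tendsto:
  assumes F: "L2_tendsto M F f"
  shows "(\<lambda>k. \<integral>t. (F k t - f t) ^ 2 \<partial>M) \<longlonglongrightarrow> 0"
proof -
  have eq: "(\<integral>x. (F n x - f x) ^ 2 \<partial>M) = enn2real (\<integral>\<^sup>+ t. ennreal ((F n t - f t) ^ 2) \<partial>M)" for n
  proof -
    have m: "(\<lambda>t. F n t) \<in> borel_measurable M" "f \<in> borel_measurable M"
      using F by (auto simp: L2_tendsto_def L2_def)
    show ?thesis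
      by (rule integral_eq_nn_integral) (use m in auto)
  qed
  have "(\<lambda>n. enn2real (\<integral>\<^sup>+ t. ennreal ((F n t - f t) ^ 2) \<partial>M)) \<longlonglongrightarrow> enn2real 0"
    using F unfolding L2_tendsto_def by (intro tendsto_enn2real) auto
  then show ?thesis unfolding eq by simp
qed

lemma L2_subseq:
  assumes F: "L2_tendsto M F f" and r: "strict_mono r"
  shows "L2_tendsto M (\<lambda>j. F (r j)) f"
  using F LIMSEQ_subseq_LIMSEQ[OF _ r] unfolding L2_tendsto_def by (auto simp: o_def)

context CS begin

lemma closed_main:
  assumes Fk: "\<forall>k. F k \<in> pos_series_set \<nu>" and L: "L2_tendsto \<nu> F g"
  shows "g \<in> pos_series_set \<nu>"
proof -
  have gL2: "g \<in> L2 \<nu>" using L by (simp add: L2_tendsto_def)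
  from Fk have "\<forall>k. \<exists>a. (\<forall>n. 0 \<le> a n) \<and> L2_tendsto \<nu> (\<lambda>N t. \<Sum>n\<le>N. a n * t ^ n) (F k)"
    by (simp add: pos_series_set_def)
  then obtain a where a: "\<forall>k n. 0 \<le> a k n"
    and aL: "\<forall>k. L2_tendsto \<nu> (\<lambda>N t. \<Sum>n\<le>N. a k n * t ^ n) (F k)"
    by metis
  show ?thesis
  proof (cases "0 < sS")
    case False
    then have sS0: "sS = 0" using sS_nonneg by simp
    have AEF: "AE t in \<nu>. False" using AE_in by eventually_elim (simp add: sS0)
    have "L2_tendsto \<nu> (\<lambda>N t. \<Sum>n\<le>N. (\<lambda>_. 0::real) n * t ^ n) g"
      unfolding L2_tendsto_def
    proof (intro conjI allI)
      show "(\<lambda>t. \<Sum>n\<le>N. (\<lambda>_. 0::real) n * t ^ n) \<in> L2 \<nu>" for N by (rule poly_L2)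
      show "g \<in> L2 \<nu>" by (rule gL2)
      have "(\<integral>\<^sup>+ t. ennreal (((\<Sum>n\<le>N. (\<lambda>_. 0::real) n * t ^ n) - g t) ^ 2) \<partial>\<nu>) = (\<integral>\<^sup>+ t. 0 \<partial>\<nu>)" for N
        by (rule nn_integral_cong_AE) (use AEF in \<open>auto elim: eventually_mono\<close>)
      then show "(\<lambda>N. \<integral>\<^sup>+ t. ennreal (((\<Sum>n\<le>N. (\<lambda>_. 0::real) n * t ^ n) - g t) ^ 2) \<partial>\<nu>) \<longlonglongrightarrow> 0"
        by simp
    qed
    then show ?thesis unfolding pos_series_set_def by (intro CollectI exI[of _ "\<lambda>_. 0::real"]) auto
  next
    case True
    obtain t0 where t0: "ereal 0 < ereal t0" "ereal t0 < sS" using ereal_dense2[of "ereal 0" sS] True zero_ereal_def by metis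
    have t0p: "0 < t0" using t0 by simp
    define m0 where "m0 = measure \<nu> {t0..}"
    have m0: "0 < m0" unfolding m0_def using meas_pos t0 t0p by auto
    have Dlim: "(\<lambda>k. \<integral>t. (F k t - g t) ^ 2 \<partial>\<nu>) \<longlonglongrightarrow> 0" by (rule L2_int_tendsto[OF L])
    have "Bseq (\<lambda>k. \<integral>t. (F k t - g t) ^ 2 \<partial>\<nu>)" using Dlim by (intro convergent_imp_Bseq convergentI)
    then obtain K where K: "\<forall>k. norm (\<integral>t. (F k t - g t) ^ 2 \<partial>\<nu>) \<le> K" using BseqE by blast
    define B where "B = 2 * K + 2 * (\<integral>t. (g t) ^ 2 \<partial>\<nu>)"
    have FB: "(\<integral>t. (F k t) ^ 2 \<partial>\<nu>) \<le> B" for k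
    proof -
      have FkL2: "F k \<in> L2 \<nu>" using L by (simp add: L2_tendsto_def)
      have i1: "integrable \<nu> (\<lambda>t. (F k t - g t) ^ 2)" by (rule L2_sq_integrable[OF FkL2 gL2])
      have i2: "integrable \<nu> (\<lambda>t. (g t) ^ 2)" using gL2 by (simp add: L2_def)
      have "(\<integral>t. (F k t) ^ 2 \<partial>\<nu>) \<le> (\<integral>t. 2 * (F k t - g t) ^ 2 + 2 * (g t) ^ 2 \<partial>\<nu>)"
      proof (rule integral_mono)
        show "integrable \<nu> (\<lambda>t. (F k t) ^ 2)" using FkL2 by (simp add: L2_def)
        show "integrable \<nu> (\<lambda>t. 2 * (F k t - g t) ^ 2 + 2 * (g t) ^ 2)" using i1 i2 by auto
        show "(F k t) ^ 2 \<le> 2 * (F k t - g t) ^ 2 + 2 * (g t) ^ 2" for t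
          using sq_ineq[of "F k t - g t" "g t"] by simp
      qed
      also have "\<dots> = 2 * (\<integral>t. (F k t - g t) ^ 2 \<partial>\<nu>) + 2 * (\<integral>t. (g t) ^ 2 \<partial>\<nu>)"
        using i1 i2 by simp
      also have "\<dots> \<le> B" unfolding B_def using K[rule_format, of k] by simp
      finally show ?thesis .
    qed
    have cb: "(a k n * t1 ^ n) ^ 2 * measure \<nu> {t1..} \<le> B" if "0 \<le> t1" for k n t1
      using coef_bound[OF _ aL[rule_format, of k] that, of n] a FB[of k] by auto
    have abound: "\<bar>a k n\<bar> \<le> sqrt (B / m0) * (1 / t0) ^ n" for k n
      using geom_bound[OF _ t0p m0, of "a k n" n B 1] cb[of t0 k n] a t0p by (simp add: m0_def)
    interpret sub: subseqs "\<lambda>n s. convergent (\<lambda>j. a (s j) n)"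
    proof
      fix n and s :: "nat \<Rightarrow> nat" assume "strict_mono s"
      have "bounded (range (\<lambda>j. a (s j) n))"
        unfolding bounded_iff using abound by (intro exI[of _ "sqrt (B / m0) * (1 / t0) ^ n"]) auto
      then obtain l r where "strict_mono r" "((\<lambda>j. a (s j) n) \<circ> r) \<longlonglongrightarrow> l"
        using bounded_imp_convergent_subsequence by blast
      then show "\<exists>r'. strict_mono r' \<and> convergent (\<lambda>j. a ((s \<circ> r') j) n)"
        by (intro exI[of _ r]) (auto simp: o_def convergent_def)
    qed
    define r where "r = sub.diagseq"
    have r: "strict_mono r" unfolding r_def by (rule sub.subseq_diagseq)
    have conv: "convergent (\<lambda>j. a (r j) n)" for n
    proof -
      have "convergent (\<lambda>j. a ((sub.diagseq \<circ> (+) (Suc n)) j) n)"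
      proof (rule sub.diagseq_holds)
        fix r' s :: "nat \<Rightarrow> nat" and k
        assume "strict_mono r'" "convergent (\<lambda>j. a (s j) k)"
        then show "convergent (\<lambda>j. a ((s \<circ> r') j) k)"
          using LIMSEQ_subseq_LIMSEQ by (auto simp: convergent_def o_def)
      qed
      then have "convergent (\<lambda>j. a (sub.diagseq (j + Suc n)) n)" by (simp add: o_def add.commute)
      then show ?thesis unfolding r_def
        using convergent_ignore_initial_segment[of "\<lambda>j. a (sub.diagseq j) n" "Suc n"] by simp
    qed
    define b where "b n = lim (\<lambda>j. a (r j) n)" for n
    have blim: "(\<lambda>j. a (r j) n) \<longlonglongrightarrow> b n" for n
      unfolding b_def using conv[of n] by (simp add: convergent_LIMSEQ_iff)
    have bnn: "\<forall>n. 0 \<le> b n"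
      using tendsto_lowerbound[OF blim] a by auto
    have bcb: "(b n * t1 ^ n) ^ 2 * measure \<nu> {t1..} \<le> B" if "0 \<le> t1" for n t1
    proof (rule tendsto_upperbound)
      show "(\<lambda>j. (a (r j) n * t1 ^ n) ^ 2 * measure \<nu> {t1..}) \<longlonglongrightarrow> (b n * t1 ^ n) ^ 2 * measure \<nu> {t1..}"
        by (intro tendsto_intros blim)
      show "\<forall>\<^sub>F j in sequentially. (a (r j) n * t1 ^ n) ^ 2 * measure \<nu> {t1..} \<le> B"
        using cb[OF that] by simp
    qed simp
    have bs: "\<forall>t. ereal \<bar>t\<bar> < sS \<longrightarrow> summable (\<lambda>n. \<bar>b n * t ^ n\<bar>)"
    proof (intro allI impI)
      fix t :: real assume ts: "ereal \<bar>t\<bar> < sS"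
      obtain t1 where t1: "ereal \<bar>t\<bar> < ereal t1" "ereal t1 < sS"
        using ereal_dense2[OF ts] by auto
      have t1': "\<bar>t\<bar> < t1" "0 < t1" using t1 by auto
      define m1 where "m1 = measure \<nu> {t1..}"
      have m1: "0 < m1" unfolding m1_def using meas_pos t1 t1' by auto
      show "summable (\<lambda>n. \<bar>b n * t ^ n\<bar>)"
      proof (rule summable_comparison_test)
        show "\<exists>N. \<forall>n\<ge>N. norm \<bar>b n * t ^ n\<bar> \<le> sqrt (B / m1) * (\<bar>t\<bar> / t1) ^ n"
          using geom_bound[OF _ t1'(2) m1] bcb[of t1] bnn t1' by (auto simp: m1_def)
        show "summable (\<lambda>n. sqrt (B / m1) * (\<bar>t\<bar> / t1) ^ n)"
          by (rule geom_summable) (rule t1')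
      qed
    qed
    have Fser: "AE t in \<nu>. \<forall>k. (\<lambda>n. a k n * t ^ n) sums F k t"
      using a aL series_ptwise by (subst AE_all_countable) auto
    have ptconv: "AE t in \<nu>. (\<lambda>j. F (r j) t) \<longlonglongrightarrow> (\<Sum>n. b n * t ^ n)"
      using Fser AE_in
    proof eventually_elim
      case (elim t)
      obtain t1 where t1: "ereal \<bar>t\<bar> < ereal t1" "ereal t1 < sS"
        using ereal_dense2[OF elim(2)] by auto
      have t1': "\<bar>t\<bar> < t1" "0 < t1" using t1 by auto
      define m1 where "m1 = measure \<nu> {t1..}"
      have m1: "0 < m1" unfolding m1_def using meas_pos t1 t1' by auto
      define M where "M n = sqrt (B / m1) * (\<bar>t\<bar> / t1) ^ n" for n
      have tann: "eventually (\<lambda>j. summable (\<lambda>k. norm (a (r j) k * t ^ k))) sequentially \<and>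
           summable (\<lambda>n. norm (b n * t ^ n)) \<and>
           ((\<lambda>j. suminf (\<lambda>k. a (r j) k * t ^ k)) \<longlonglongrightarrow> suminf (\<lambda>k. b k * t ^ k))"
      proof (rule tannerys_theorem)
        show "(\<lambda>j. a (r j) k * t ^ k) \<longlonglongrightarrow> b k * t ^ k" for k
          by (intro tendsto_mult_right blim)
        show "\<forall>\<^sub>F (k, j) in at_top \<times>\<^sub>F sequentially. norm (a (r j) k * t ^ k) \<le> M k"
        proof (rule always_eventually, intro allI)
          fix p :: "nat \<times> nat"
          obtain k j where p: "p = (k, j)" by (cases p)
          have "(a (r j) k * t1 ^ k) ^ 2 * m1 \<le> B" unfolding m1_def using cb t1' by simp
          then have "\<bar>a (r j) k * t ^ k\<bar> \<le> M k" unfolding M_def using geom_bound[OF _ t1'(2) m1] a by blast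
          then show "case p of (k, j) \<Rightarrow> norm (a (r j) k * t ^ k) \<le> M k" using p by simp
        qed
        show "summable M" unfolding M_def by (rule geom_summable) (rule t1')
      qed simp
      then have "(\<lambda>j. \<Sum>k. a (r j) k * t ^ k) \<longlonglongrightarrow> (\<Sum>k. b k * t ^ k)" by blast
      moreover have "(\<Sum>k. a (r j) k * t ^ k) = F (r j) t" for j
        using elim(1) sums_unique by metis
      ultimately show ?case by simp
    qed
    have Lr: "L2_tendsto \<nu> (\<lambda>j. F (r j)) g" by (rule L2_subseq[OF L r])
    obtain r' where r': "strict_mono r'" and aer: "AE t in \<nu>. (\<lambda>j. F (r (r' j)) t) \<longlonglongrightarrow> g t"
      using L2_sub_AE[OF Lr] by auto
    have gf: "AE t in \<nu>. g t = (\<Sum>n. b n * t ^ n)"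
      using ptconv aer
    proof eventually_elim
      case (elim t)
      have "(\<lambda>j. F (r (r' j)) t) \<longlonglongrightarrow> (\<Sum>n. b n * t ^ n)"
        using LIMSEQ_subseq_LIMSEQ[OF elim(1) r'] by (simp add: o_def)
      then show ?case using elim(2) LIMSEQ_unique by blast
    qed
    have "L2_tendsto \<nu> (\<lambda>N t. \<Sum>n\<le>N. b n * t ^ n) g" by (rule final_conv[OF bnn gL2 gf bs])
    then show ?thesis unfolding pos_series_set_def using bnn by blast
  qed
qed

end

theorem corollary1p2:
  fixes \<nu> :: "real measure" and C :: real
  assumes radon: "radon_on_real \<nu>"
    and moments: "\<forall>n::nat. (\<integral>\<^sup>+ t. ennreal (t ^ n) \<partial>(restr_pos \<nu>)) < \<infinity>"
    and no_mass_at_end: "emeasure (restr_pos \<nu>) {t. 0 \<le> t \<and> supp_sup (restr_pos \<nu>) \<le> ereal t} = 0"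
    and C_pos: "C > 0"
    and neg_bound: "\<forall>n::nat. (\<integral>\<^sup>+ t. ennreal (t ^ (2*n)) * indicator {..<0} t \<partial>\<nu>)
                     \<le> ennreal C * (\<integral>\<^sup>+ t. ennreal (t ^ (2*n)) * indicator {0..} t \<partial>\<nu>)"
  shows "(\<forall>f\<in>pos_series_set \<nu>. \<forall>c\<ge>0. (\<lambda>t. c * f t) \<in> pos_series_set \<nu>)
       \<and> (\<forall>f\<in>pos_series_set \<nu>. \<forall>g\<in>pos_series_set \<nu>. \<forall>\<theta>::real. 0 \<le> \<theta> \<and> \<theta> \<le> 1 \<longrightarrow>
            (\<lambda>t. \<theta> * f t + (1 - \<theta>) * g t) \<in> pos_series_set \<nu>)
       \<and> (\<forall>F g. (\<forall>k. F k \<in> pos_series_set \<nu>) \<and> L2_tendsto \<nu> F g \<longrightarrow> g \<in> pos_series_set \<nu>)"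
proof -
  interpret CS \<nu> C using assms by unfold_locales
  have P1: "\<forall>f\<in>pos_series_set \<nu>. \<forall>c\<ge>0. (\<lambda>t. c * f t) \<in> pos_series_set \<nu>"
  proof (intro ballI allI impI)
    fix f and c :: real assume f: "f \<in> pos_series_set \<nu>" and c: "0 \<le> c"
    from f obtain a where a: "\<forall>n. 0 \<le> a n" and aL: "L2_tendsto \<nu> (\<lambda>N t. \<Sum>n\<le>N. a n * t ^ n) f"
      unfolding pos_series_set_def by blast
    have eq1: "(\<lambda>k t. c * (\<Sum>n\<le>k. a n * t ^ n) + 0 * (\<Sum>n\<le>k. a n * t ^ n)) = (\<lambda>N t. \<Sum>n\<le>N. (c * a n) * t ^ n)"
    proof (intro ext)
      fix k and t :: real
      show "c * (\<Sum>n\<le>k. a n * t ^ n) + 0 * (\<Sum>n\<le>k. a n * t ^ n) = (\<Sum>n\<le>k. (c * a n) * t ^ n)"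
        by (simp only: mult_zero_left add_0_right sum_distrib_left mult.assoc sum.neutral_const)
    qed
    have eq2: "(\<lambda>t. c * f t + 0 * f t) = (\<lambda>t. c * f t)" by (intro ext) (simp only: mult_zero_left add_0_right)
    have L: "L2_tendsto \<nu> (\<lambda>N t. \<Sum>n\<le>N. (c * a n) * t ^ n) (\<lambda>t. c * f t)"
      using L2_lin[OF aL aL, of c 0] unfolding eq1 eq2 .
    have nn: "\<forall>n. 0 \<le> c * a n" using a c by (simp add: mult_nonneg_nonneg)
    show "(\<lambda>t. c * f t) \<in> pos_series_set \<nu>" unfolding pos_series_set_def
      using L nn by (intro CollectI exI[of _ "\<lambda>n. c * a n"] conjI)
  qed
  have P2: "\<forall>f\<in>pos_series_set \<nu>. \<forall>g\<in>pos_series_set \<nu>. \<forall>\<theta>::real. 0 \<le> \<theta> \<and> \<theta> \<le> 1 \<longrightarrow>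
            (\<lambda>t. \<theta> * f t + (1 - \<theta>) * g t) \<in> pos_series_set \<nu>"
  proof (intro ballI allI impI)
    fix f g and \<theta> :: real assume f: "f \<in> pos_series_set \<nu>" and g: "g \<in> pos_series_set \<nu>" and th: "0 \<le> \<theta> \<and> \<theta> \<le> 1"
    from f obtain a where a: "\<forall>n. 0 \<le> a n" and aL: "L2_tendsto \<nu> (\<lambda>N t. \<Sum>n\<le>N. a n * t ^ n) f"
      unfolding pos_series_set_def by blast
    from g obtain b where b: "\<forall>n. 0 \<le> b n" and bL: "L2_tendsto \<nu> (\<lambda>N t. \<Sum>n\<le>N. b n * t ^ n) g"
      unfolding pos_series_set_def by blast
    have eq1: "(\<lambda>k t. \<theta> * (\<Sum>n\<le>k. a n * t ^ n) + (1 - \<theta>) * (\<Sum>n\<le>k. b n * t ^ n)) =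
        (\<lambda>N t. \<Sum>n\<le>N. (\<theta> * a n + (1 - \<theta>) * b n) * t ^ n)"
    proof (intro ext)
      fix k and t :: real
      show "\<theta> * (\<Sum>n\<le>k. a n * t ^ n) + (1 - \<theta>) * (\<Sum>n\<le>k. b n * t ^ n) =
          (\<Sum>n\<le>k. (\<theta> * a n + (1 - \<theta>) * b n) * t ^ n)"
        by (simp only: sum_distrib_left sum.distrib[symmetric] distrib_right mult.assoc)
    qed
    have L: "L2_tendsto \<nu> (\<lambda>N t. \<Sum>n\<le>N. (\<theta> * a n + (1 - \<theta>) * b n) * t ^ n) (\<lambda>t. \<theta> * f t + (1 - \<theta>) * g t)"
      using L2_lin[OF aL bL, of \<theta> "1 - \<theta>"] unfolding eq1 .
    have nn: "\<forall>n. 0 \<le> \<theta> * a n + (1 - \<theta>) * b n" using a b th by (simp add: mult_nonneg_nonneg)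
    show "(\<lambda>t. \<theta> * f t + (1 - \<theta>) * g t) \<in> pos_series_set \<nu>" unfolding pos_series_set_def
      using L nn by (intro CollectI exI[of _ "\<lambda>n. \<theta> * a n + (1 - \<theta>) * b n"] conjI)
  qed
  have P3: "\<forall>F g. (\<forall>k. F k \<in> pos_series_set \<nu>) \<and> L2_tendsto \<nu> F g \<longrightarrow> g \<in> pos_series_set \<nu>"
    using closed_main by blast
  show ?thesis using P1 P2 P3 by (intro conjI)
qed

end
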